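(* Let $(\mathfrak D,d)$ be a finite metric space, $p\in(1,\infty)$, $\vartheta\in\mathcal P(\mathfrak D)$, $\{\mu_k\}_{k\in\mathbb{N}}\subset\mathcal P(\mathfrak D)$, and for each $k$ let $(\varphi_k,\psi_k)$ be functions on $\mathfrak D$ with $\psi_k=\varphi_k^c$, $\varphi_k=\psi_k^c$ and $W_p^p(\vartheta,\mu_k)=\int\varphi_k\,d\mu_k+\int\psi_k\,d\vartheta$. There is a constant $C_{p,\mathfrak D}>0$, depending only on $p$, $\mathfrak D$ and $d$, such that for every finite $I\subset\mathbb{N}$, \[|G_I(\mu)-G_I(\nu)|\le C_{p,\mathfrak D}W_p(\mu,\nu)\qquad\text{for all }\mu,\nu\in\mathcal P(\mathfrak D),\] where $G_I(\mu):=\max_{k\in I}\big(\int\varphi_k\,d\mu+\int\psi_k\,d\vartheta\big)$.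
   Context: $\mathcal P(\mathfrak D)$: probability measures on $\mathfrak D$; $W_p$: $p$-Wasserstein distance with cost $d^p$; $\varphi^c(x):=\inf_{y\in\mathfrak D}(d(x,y)^p-\varphi(y))$. *)

theory Defs
  imports "HOL-Probability.Probability"
begin

text \<open>Finite metric space: a type of class finite and metric_space (metric = dist).
Probability measures on it: 'a pmf. Integral of f against mu: measure_pmf.expectation mu f.\<close>

definition couplings :: "'a pmf \<Rightarrow> 'b pmf \<Rightarrow> ('a \<times> 'b) pmf set" where
  "couplings \<mu> \<nu> = {\<pi>. map_pmf fst \<pi> = \<mu> \<and> map_pmf snd \<pi> = \<nu>}"

definition transport_cost :: "real \<Rightarrow> 'a::metric_space pmf \<Rightarrow> 'a pmf \<Rightarrow> real" where
  "transport_cost p \<mu> \<nu> =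
     (INF \<pi>\<in>couplings \<mu> \<nu>. measure_pmf.expectation \<pi> (\<lambda>(x,y). dist x y powr p))"

definition Wass :: "real \<Rightarrow> 'a::metric_space pmf \<Rightarrow> 'a pmf \<Rightarrow> real" where
  "Wass p \<mu> \<nu> = transport_cost p \<mu> \<nu> powr (1 / p)"

definition c_transform :: "real \<Rightarrow> ('a::metric_space \<Rightarrow> real) \<Rightarrow> 'a \<Rightarrow> real" where
  "c_transform p \<phi> x = (INF y. dist x y powr p - \<phi> y)"

end

theory Submission
  imports Defs
begin

lemma ctrans_le:
  fixes \<psi> :: "'a::{finite,metric_space} \<Rightarrow> real"
  assumes H: "\<And>x y z::'a. \<bar>dist x z powr p - dist y z powr p\<bar> \<le> K * dist x y powr p"
  shows "c_transform p \<psi> x - c_transform p \<psi> y \<le> K * dist x y powr p"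
proof -
  let ?g = "\<lambda>y z. dist y z powr p - \<psi> z"
  have eq: "c_transform p \<psi> y = Min (range (?g y))" for y
    unfolding c_transform_def by (rule cInf_eq_Min) auto
  have "Min (range (?g y)) \<in> range (?g y)" by (rule Min_in) auto
  then obtain z0 where "Min (range (?g y)) = ?g y z0" by blast
  then have z0: "c_transform p \<psi> y = ?g y z0"
    using eq[of y] by simp
  have "c_transform p \<psi> x \<le> ?g x z0" unfolding eq by (rule Min_le) auto
  then have "c_transform p \<psi> x - c_transform p \<psi> y \<le> dist x z0 powr p - dist y z0 powr p"
    using z0 by simp
  also have "\<dots> \<le> K * dist x y powr p" using H[where x=x and y=y and z=z0] by simp
  finally show ?thesis .
qed

lemma ctrans_lip:
  fixes \<psi> :: "'a::{finite,metric_space} \<Rightarrow> real"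
  assumes H: "\<And>x y z::'a. \<bar>dist x z powr p - dist y z powr p\<bar> \<le> K * dist x y powr p"
  shows "\<bar>c_transform p \<psi> x - c_transform p \<psi> y\<bar> \<le> K * dist x y powr p"
  using ctrans_le[OF H, of \<psi> x y] ctrans_le[OF H, of \<psi> y x] by (simp add: dist_commute)

lemma couplings_ne: "pair_pmf \<mu> \<nu> \<in> couplings \<mu> \<nu>"
  unfolding couplings_def by (simp add: map_fst_pair_pmf map_snd_pair_pmf)

lemma tc_bdd: "bdd_below ((\<lambda>\<pi>. measure_pmf.expectation \<pi> (\<lambda>(x,y). dist x y powr p)) ` couplings \<mu> \<nu>)"
  by (rule bdd_belowI[of _ 0]) (auto intro!: integral_nonneg_AE)

lemma expect_lip:
  fixes f :: "'a::{finite,metric_space} \<Rightarrow> real"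
  assumes H: "\<And>x y. \<bar>f x - f y\<bar> \<le> K * dist x y powr p" and K: "K \<ge> 0"
  shows "\<bar>measure_pmf.expectation \<mu> f - measure_pmf.expectation \<nu> f\<bar> \<le> K * transport_cost p \<mu> \<nu>"
proof -
  have main: "\<bar>measure_pmf.expectation \<mu> f - measure_pmf.expectation \<nu> f\<bar>
      \<le> K * measure_pmf.expectation \<pi> (\<lambda>(x,y). dist x y powr p)" if "\<pi> \<in> couplings \<mu> \<nu>" for \<pi>
  proof -
    have mu: "\<mu> = map_pmf fst \<pi>" and nu: "\<nu> = map_pmf snd \<pi>" using that unfolding couplings_def by auto
    have fin: "finite (set_pmf \<pi>)"
      by (rule finite_subset[of _ UNIV]) auto
    have "measure_pmf.expectation \<mu> f - measure_pmf.expectation \<nu> f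
        = measure_pmf.expectation \<pi> (\<lambda>z. f (fst z) - f (snd z))"
      unfolding mu nu integral_map_pmf
      by (rule Bochner_Integration.integral_diff[symmetric]; rule integrable_measure_pmf_finite[OF fin])
    also have "\<bar>\<dots>\<bar> \<le> measure_pmf.expectation \<pi> (\<lambda>z. \<bar>f (fst z) - f (snd z)\<bar>)"
      by (rule integral_abs_bound)
    also have "\<dots> \<le> measure_pmf.expectation \<pi> (\<lambda>z. K * (case z of (x,y) \<Rightarrow> dist x y powr p))"
      by (rule integral_mono) (auto intro!: integrable_measure_pmf_finite[OF fin] simp: H split: prod.splits)
    also have "\<dots> = K * measure_pmf.expectation \<pi> (\<lambda>(x,y). dist x y powr p)"
      by simp
    finally show ?thesis .
  qed
  show ?thesis
  proof (cases "K = 0")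
    case True
    then show ?thesis using main[OF couplings_ne] by simp
  next
    case False
    then have Kp: "K > 0" using K by simp
    have "\<bar>measure_pmf.expectation \<mu> f - measure_pmf.expectation \<nu> f\<bar> / K \<le> transport_cost p \<mu> \<nu>"
      unfolding transport_cost_def
      apply (rule cINF_greatest)
      using couplings_ne apply blast
      using main Kp by (simp add: divide_le_eq mult.commute)
    then show ?thesis using Kp by (simp add: divide_le_eq mult.commute)
  qed
qed

lemma max_diff:
  fixes a b :: "nat \<Rightarrow> real"
  assumes "finite I" "\<And>k. k \<in> I \<Longrightarrow> \<bar>a k - b k\<bar> \<le> M" "M \<ge> 0"
  shows "\<bar>Max (a ` I) - Max (b ` I)\<bar> \<le> M"
proof (cases "I = {}")
  case True then show ?thesis using assms by simp
next
  case False
  have one: "Max (a ` I) - Max (b ` I) \<le> M" if "\<And>k. k \<in> I \<Longrightarrow> \<bar>a k - b k\<bar> \<le> M" for a b :: "nat \<Rightarrow> real"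
  proof -
    have "Max (a ` I) \<in> a ` I" using assms(1) False by (intro Max_in) auto
    then obtain k where k: "k \<in> I" "Max (a ` I) = a k" by auto
    have "b k \<le> Max (b ` I)" using k assms(1) by auto
    then show ?thesis using k that[OF k(1)] by linarith
  qed
  show ?thesis using one[of a b] one[of b a] assms(2) by (force simp: abs_minus_commute)
qed

lemma tc_bounds:
  fixes \<mu> \<nu> :: "'a::{finite,metric_space} pmf"
  assumes "\<And>x y::'a. dist x y powr p \<le> B"
  shows "0 \<le> transport_cost p \<mu> \<nu>" "transport_cost p \<mu> \<nu> \<le> B"
proof -
  show "0 \<le> transport_cost p \<mu> \<nu>" unfolding transport_cost_def
    by (rule cINF_greatest) (use couplings_ne in \<open>auto intro!: integral_nonneg_AE\<close>)
  have "transport_cost p \<mu> \<nu> \<le> measure_pmf.expectation (pair_pmf \<mu> \<nu>) (\<lambda>(x,y). dist x y powr p)"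
    unfolding transport_cost_def by (rule cINF_lower[OF tc_bdd couplings_ne])
  also have "\<dots> \<le> measure_pmf.expectation (pair_pmf \<mu> \<nu>) (\<lambda>_. B)"
    by (rule integral_mono) (auto intro!: integrable_measure_pmf_finite simp: assms split: prod.splits)
  also have "\<dots> = B" by simp
  finally show "transport_cost p \<mu> \<nu> \<le> B" .
qed

lemma T_le_W:
  fixes T B p :: real
  assumes "1 < p" "0 \<le> T" "T \<le> B" "1 \<le> B"
  shows "T \<le> B * T powr (1/p)"
proof (cases "T = 0")
  case True then show ?thesis by simp
next
  case False
  then have Tp: "T > 0" using assms by simp
  have "T = T powr (1/p) * T powr (1 - 1/p)" using Tp by (simp add: powr_add[symmetric])
  also have "T powr (1 - 1/p) \<le> B powr (1 - 1/p)"
    using assms Tp by (intro powr_mono2) (auto simp: field_simps)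
  also have "B powr (1 - 1/p) \<le> B powr 1"
    using assms by (intro powr_mono) (auto simp: field_simps)
  finally have "T \<le> T powr (1/p) * B powr 1"
    by (simp add: mult_left_mono)
  then show ?thesis using assms by (simp add: mult.commute)
qed

theorem lemmaB5:
  fixes p :: real
  assumes "1 < p"
  shows "\<exists>C>0. \<forall>(\<theta>::'a::{finite,metric_space} pmf) (\<mu>s :: nat \<Rightarrow> 'a pmf)
            (\<phi> :: nat \<Rightarrow> 'a \<Rightarrow> real) (\<psi> :: nat \<Rightarrow> 'a \<Rightarrow> real).
     (\<forall>k. \<psi> k = c_transform p (\<phi> k) \<and> \<phi> k = c_transform p (\<psi> k) \<and>
          Wass p \<theta> (\<mu>s k) powr p =
            measure_pmf.expectation (\<mu>s k) (\<phi> k) + measure_pmf.expectation \<theta> (\<psi> k))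
     \<longrightarrow> (\<forall>I :: nat set. finite I \<longrightarrow> (\<forall>\<mu> \<nu> :: 'a pmf.
           \<bar>Max ((\<lambda>k. measure_pmf.expectation \<mu> (\<phi> k) + measure_pmf.expectation \<theta> (\<psi> k)) ` I)
            - Max ((\<lambda>k. measure_pmf.expectation \<nu> (\<phi> k) + measure_pmf.expectation \<theta> (\<psi> k)) ` I)\<bar>
           \<le> C * Wass p \<mu> \<nu>))"
proof -
  define K where "K = Max (range (\<lambda>(x::'a,y::'a,z::'a). \<bar>dist x z powr p - dist y z powr p\<bar> / dist x y powr p))"
  define B where "B = max 1 (Max (range (\<lambda>(x::'a,y::'a). dist x y powr p)))"
  have K0: "K \<ge> 0"
  proof -
    obtain x :: 'a where True by simp
    have "(\<lambda>(x::'a,y::'a,z::'a). \<bar>dist x z powr p - dist y z powr p\<bar> / dist x y powr p) (x,x,x) \<le> K"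
      unfolding K_def by (rule Max_ge[OF finite_imageI[OF finite] rangeI])
    then show ?thesis by simp
  qed
  have H: "\<bar>dist x z powr p - dist y z powr p\<bar> \<le> K * dist x y powr p" for x y z :: 'a
  proof (cases "x = y")
    case True then show ?thesis using K0 by simp
  next
    case False
    then have pos: "dist x y powr p > 0" by simp
    have "(\<lambda>(x::'a,y::'a,z::'a). \<bar>dist x z powr p - dist y z powr p\<bar> / dist x y powr p) (x,y,z) \<le> K"
      unfolding K_def by (rule Max_ge[OF finite_imageI[OF finite] rangeI])
    then show ?thesis using pos by (simp add: divide_le_eq)
  qed
  have B1: "1 \<le> B" unfolding B_def by simp
  have HB: "dist x y powr p \<le> B" for x y :: 'a
  proof -
    have "(\<lambda>(x::'a,y::'a). dist x y powr p) (x,y) \<le> Max (range (\<lambda>(x::'a,y::'a). dist x y powr p))"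
      by (rule Max_ge[OF finite_imageI[OF finite] rangeI])
    then show ?thesis unfolding B_def by simp
  qed
  show ?thesis
  proof (intro exI[of _ "(K+1)*B"] conjI allI impI)
    show "0 < (K+1)*B" using K0 B1 by simp
  next
    fix \<theta> :: "'a pmf" and \<mu>s :: "nat \<Rightarrow> 'a pmf" and \<phi> \<psi> :: "nat \<Rightarrow> 'a \<Rightarrow> real" and I :: "nat set"
      and \<mu> \<nu> :: "'a pmf"
    assume A: "\<forall>k. \<psi> k = c_transform p (\<phi> k) \<and> \<phi> k = c_transform p (\<psi> k) \<and>
          Wass p \<theta> (\<mu>s k) powr p =
            measure_pmf.expectation (\<mu>s k) (\<phi> k) + measure_pmf.expectation \<theta> (\<psi> k)"
      and fI: "finite I"
    let ?T = "transport_cost p \<mu> \<nu>"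
    have T0: "0 \<le> ?T" and TB: "?T \<le> B" using tc_bounds[OF HB] by auto
    have W0: "0 \<le> Wass p \<mu> \<nu>" unfolding Wass_def by simp
    have TW: "?T \<le> B * Wass p \<mu> \<nu>" unfolding Wass_def
      by (rule T_le_W[OF assms T0 TB B1])
    have each: "\<bar>measure_pmf.expectation \<mu> (\<phi> k) - measure_pmf.expectation \<nu> (\<phi> k)\<bar>
        \<le> (K+1)*B * Wass p \<mu> \<nu>" for k
    proof -
      have "\<phi> k = c_transform p (\<psi> k)" using A by blast
      then have L: "\<bar>\<phi> k x - \<phi> k y\<bar> \<le> K * dist x y powr p" for x y
        using ctrans_lip[OF H] by simp
      have "\<bar>measure_pmf.expectation \<mu> (\<phi> k) - measure_pmf.expectation \<nu> (\<phi> k)\<bar> \<le> K * ?T"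
        by (rule expect_lip[OF L K0])
      also have "\<dots> \<le> K * (B * Wass p \<mu> \<nu>)" by (rule mult_left_mono[OF TW K0])
      also have "\<dots> \<le> (K+1) * B * Wass p \<mu> \<nu>"
        using W0 B1 by (simp add: algebra_simps)
      finally show ?thesis .
    qed
    show "\<bar>Max ((\<lambda>k. measure_pmf.expectation \<mu> (\<phi> k) + measure_pmf.expectation \<theta> (\<psi> k)) ` I)
            - Max ((\<lambda>k. measure_pmf.expectation \<nu> (\<phi> k) + measure_pmf.expectation \<theta> (\<psi> k)) ` I)\<bar>
           \<le> (K+1)*B * Wass p \<mu> \<nu>"
      by (rule max_diff[OF fI]) (use each W0 K0 B1 in auto)
  qed
qed

end
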